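(* Let $\mathcal C=(c^{(i)}_{j,k})$ be a sequence such that there exist $a\in\mathbb R$ and $C_0>0$ with $|c^{(i)}_{j,k}|\le C_0 2^{aj}$ for all $i,j,k$. For $J\ge 0$ and $x\in\mathbb R^d$ put $P_{J,\mathcal C}(x)=\sum_{j=0}^{J}\sum_{i=1}^{N}\sum_{k\in\mathbb Z^d}c^{(i)}_{j,k}\psi^{(i)}_{j,k}(x)$. (1) Let $\gamma<0$ and $x\in\mathbb R^d$. If there is $C_1>0$ such that $|c^{(i)}_{j,k}\psi^{(i)}_{j,k}(x)|\le C_1 2^{\gamma j}$ for all $i,j,k$, then $P_{J,\mathcal C}(x)$ has a limit $f_{\mathcal C}(x)$ as $J\to+\infty$, and for every $\gamma'>\gamma$ there is $C_2>0$ such that $|f_{\mathcal C}(x)-P_{J,\mathcal C}(x)|\le C_2 2^{\gamma' J}$ for all $J\ge0$. (2) Let $\gamma>0$ and $x\in\mathbb R^d$. If the sequence $(P_{j,\mathcal C}(x))_j$ diverges at rate $\gamma$, i.e. there exist $C>0$ and $j_n\to+\infty$ with $|P_{j_n,\mathcal C}(x)|\ge C2^{\gamma j_n}$, then for every $\delta<\gamma$ the wavelet series of $\mathcal C$ diverges at rate at least $\delta$ at $x$, i.e. $\mathcal C\in D^\delta(x)$.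
   Context: Fix integers $d\ge1$, $N\ge1$ and bounded functions $\psi^{(1)},\dots,\psi^{(N)}:\mathbb R^d\to\mathbb C$ with fast decay (for every $n>0$ there is $C_n$ with $|\psi^{(i)}(x)|\le C_n(1+|x|)^{-n}$ for all $x$). The associated wavelet system is $\psi^{(i)}_{j,k}(x)=\psi^{(i)}(2^jx-k)$, $1\le i\le N$, $j\ge0$ an integer, $k\in\mathbb Z^d$ (no orthogonality, normalisation or vanishing moments are assumed). A sequence is a family $\mathcal C=(c^{(i)}_{j,k})$ of complex numbers; its wavelet series is $\sum_{j\ge0}\sum_{i=1}^N\sum_{k\in\mathbb Z^d}c^{(i)}_{j,k}\psi^{(i)}_{j,k}(x)$. For $\gamma\in\mathbb R$ and $x\in\mathbb R^d$, we write $\mathcal C\in D^\gamma(x)$ ("the wavelet series diverges at rate at least $\gamma$ at $x$") if there exist $C>0$ and indices $(i_n,j_n,k_n)$ with $j_n\to+\infty$ and $|c^{(i_n)}_{j_n,k_n}\psi^{(i_n)}_{j_n,k_n}(x)|\ge C2^{\gamma j_n}$ for all $n$. *)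

theory Defs
  imports "HOL-Analysis.Analysis"
begin

definition wav :: "(nat \<Rightarrow> real^'d \<Rightarrow> complex) \<Rightarrow> nat \<Rightarrow> nat \<Rightarrow> int^'d \<Rightarrow> real^'d \<Rightarrow> complex" where
  "wav \<psi> i j k x = \<psi> i ((2::real) ^ j *\<^sub>R x - (\<chi> l. real_of_int (k $ l)))"

definition Psum :: "(nat \<Rightarrow> real^'d \<Rightarrow> complex) \<Rightarrow> (nat \<Rightarrow> nat \<Rightarrow> int^'d \<Rightarrow> complex) \<Rightarrow> nat \<Rightarrow> nat \<Rightarrow> real^'d \<Rightarrow> complex" where
  "Psum \<psi> c N J x = (\<Sum>j\<le>J. \<Sum>i=1..N. infsum (\<lambda>k. c i j k * wav \<psi> i j k x) UNIV)"

definition Drate :: "(nat \<Rightarrow> real^'d \<Rightarrow> complex) \<Rightarrow> (nat \<Rightarrow> nat \<Rightarrow> int^'d \<Rightarrow> complex) \<Rightarrow> nat \<Rightarrow> real \<Rightarrow> real^'d \<Rightarrow> bool" where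
  "Drate \<psi> c N \<gamma> x \<longleftrightarrow> (\<exists>C>0. \<exists>is js ks. filterlim (js :: nat \<Rightarrow> nat) at_top sequentially \<and>
     (\<forall>n. is n \<in> {1..N} \<and> norm (c (is n) (js n) (ks n) * wav \<psi> (is n) (js n) (ks n) x) \<ge> C * 2 powr (\<gamma> * real (js n))))"

end

theory Submission imports Defs begin

definition g0 :: "int \<Rightarrow> real" where "g0 z = 1 / (1 + \<bar>real_of_int z\<bar>)^2"

lemma g0_nonneg: "g0 z \<ge> 0" by (simp add: g0_def)

lemma g0_summable: "g0 summable_on UNIV"
proof -
  have s: "summable (\<lambda>n. inverse ((real_of_nat (Suc n))\<^sup>2))"
    using inverse_power_summable[of 2] by (subst summable_Suc_iff) simp
  have eq: "(\<lambda>n. g0 (int n)) = (\<lambda>n. inverse ((real_of_nat (Suc n))\<^sup>2))"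
    by (auto simp: g0_def fun_eq_iff inverse_eq_divide add.commute)
  have eq2: "(\<lambda>n. g0 (- int n)) = (\<lambda>n. inverse ((real_of_nat (Suc n))\<^sup>2))"
    by (auto simp: g0_def fun_eq_iff inverse_eq_divide add.commute)
  have "(\<lambda>n. g0 (int n)) summable_on UNIV"
    unfolding eq by (rule norm_summable_imp_summable_on) (use s in simp)
  hence A: "g0 summable_on range int"
    by (subst summable_on_reindex) (auto simp: o_def)
  have "(\<lambda>n. g0 (- int n)) summable_on UNIV"
    unfolding eq2 by (rule norm_summable_imp_summable_on) (use s in simp)
  hence B: "g0 summable_on range (\<lambda>n. - int n)"
    by (subst summable_on_reindex) (auto simp: o_def inj_on_def)
  have U: "range int \<union> range (\<lambda>n. - int n) = UNIV"
  proof (safe)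
    fix z :: int assume "z \<notin> range (\<lambda>n. - int n)"
    have "z \<ge> 0"
    proof (rule ccontr)
      assume "\<not> 0 \<le> z"
      hence "z = - int (nat (- z))" by simp
      hence "z \<in> range (\<lambda>n. - int n)" by (rule image_eqI) simp
      with \<open>z \<notin> range (\<lambda>n. - int n)\<close> show False by blast
    qed
    then show "z \<in> range int" by (metis nonneg_int_cases rangeI)
  qed auto
  show ?thesis using summable_on_union[OF A B] U by simp
qed

lemma aux_ineq1: "t - 1 < (r::real) \<Longrightarrow> r \<le> t \<Longrightarrow> z - r \<le> 1 + 2 * \<bar>t - z\<bar>"
  by (simp add: abs_if)

lemma aux_ineq2: "t - 1 < (r::real) \<Longrightarrow> r \<le> t \<Longrightarrow> - (z - r) \<le> 1 + 2 * \<bar>t - z\<bar>"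
  by (simp add: abs_if)

definition S0 :: real where "S0 = infsum g0 UNIV"

lemma h_bound:
  fixes t :: real
  shows "(\<lambda>z::int. 1 / (1 + \<bar>t - real_of_int z\<bar>)^2) summable_on UNIV \<and>
         infsum (\<lambda>z::int. 1 / (1 + \<bar>t - real_of_int z\<bar>)^2) UNIV \<le> 4 * S0"
proof -
  define r where "r = \<lfloor>t\<rfloor>"
  have bij: "bij_betw (\<lambda>z. z - r) UNIV UNIV"
    by (rule bij_betwI[of _ _ _ "\<lambda>z. z + r"]) auto
  have s1: "(\<lambda>z. g0 (z - r)) summable_on UNIV"
    using summable_on_reindex_bij_betw[OF bij, of g0] g0_summable by simp
  have i1: "infsum (\<lambda>z. g0 (z - r)) UNIV = S0"
    using infsum_reindex_bij_betw[OF bij, of g0] by (simp add: S0_def)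
  have s2: "(\<lambda>z. 4 * g0 (z - r)) summable_on UNIV"
    using s1 by (rule summable_on_cmult_right)
  have le: "1 / (1 + \<bar>t - real_of_int z\<bar>)^2 \<le> 4 * g0 (z - r)" for z
  proof -
    have "t - 1 < real_of_int r" "real_of_int r \<le> t" unfolding r_def by linarith+
    note rr = this
    have u1: "real_of_int z - real_of_int r \<le> 1 + 2 * \<bar>t - real_of_int z\<bar>"
      using aux_ineq1[OF rr] .
    have u2: "- (real_of_int z - real_of_int r) \<le> 1 + 2 * \<bar>t - real_of_int z\<bar>"
      using aux_ineq2[OF rr] .
    have "\<bar>real_of_int z - real_of_int r\<bar> \<le> 1 + 2 * \<bar>t - real_of_int z\<bar>"
      using u1 u2 by (simp only: abs_le_iff)
    hence a: "1 + \<bar>real_of_int (z - r)\<bar> \<le> 2 * (1 + \<bar>t - real_of_int z\<bar>)" by simp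
    have "(1 + \<bar>real_of_int (z - r)\<bar>)^2 \<le> (2 * (1 + \<bar>t - real_of_int z\<bar>))^2"
      using a by (intro power_mono) auto
    moreover have "(2 * (1 + \<bar>t - real_of_int z\<bar>))^2 = 4 * (1 + \<bar>t - real_of_int z\<bar>)^2"
      by (simp add: power2_eq_square algebra_simps)
    ultimately have "(1 + \<bar>real_of_int (z - r)\<bar>)^2 \<le> 4 * (1 + \<bar>t - real_of_int z\<bar>)^2"
      by linarith
    thus ?thesis unfolding g0_def
      by (simp add: divide_simps) arith
  qed
  have s3: "(\<lambda>z::int. 1 / (1 + \<bar>t - real_of_int z\<bar>)^2) summable_on UNIV"
    by (rule summable_on_comparison_test[OF s2]) (use le in auto)
  have "infsum (\<lambda>z::int. 1 / (1 + \<bar>t - real_of_int z\<bar>)^2) UNIV \<le> infsum (\<lambda>z. 4 * g0 (z - r)) UNIV"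
    by (rule infsum_mono[OF s3 s2]) (use le in auto)
  also have "\<dots> = 4 * S0" using i1 by (simp add: infsum_cmult_right s1)
  finally show ?thesis using s3 by blast
qed

definition hh :: "real \<Rightarrow> int \<Rightarrow> real" where "hh t z = 1 / (1 + \<bar>t - real_of_int z\<bar>)^2"

lemma S0_pos: "S0 > 0"
proof -
  have "sum g0 {0} \<le> infsum g0 UNIV"
    by (rule finite_sum_le_infsum[OF g0_summable]) (auto simp: g0_nonneg)
  thus ?thesis by (simp add: S0_def g0_def)
qed

lemma lattice_sum:
  fixes y :: "real^'d"
  shows "(\<lambda>k::int^'d. \<Prod>l\<in>UNIV. hh (y$l) (k$l)) summable_on UNIV \<and>
         infsum (\<lambda>k::int^'d. \<Prod>l\<in>UNIV. hh (y$l) (k$l)) UNIV \<le> (4 * S0) ^ CARD('d)"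
proof -
  have hs: "hh t summable_on UNIV" "infsum (hh t) UNIV \<le> 4 * S0" for t
    using h_bound[of t] unfolding hh_def[abs_def] by auto
  have hn: "hh t z \<ge> 0" for t z by (simp add: hh_def)
  have hpos: "infsum (hh t) UNIV > 0" for t
  proof -
    have "sum (hh t) {\<lfloor>t\<rfloor>} \<le> infsum (hh t) UNIV"
      by (rule finite_sum_le_infsum[OF hs(1)]) (auto simp: hn)
    moreover have "hh t \<lfloor>t\<rfloor> > 0" by (simp add: hh_def) arith
    ultimately show ?thesis by simp
  qed
  have abs: "(\<lambda>z. norm (hh (y$l) z)) summable_on UNIV" for l
    using hs(1)[of "y$l"] by (simp add: hn)
  have eq: "infsum (\<lambda>g. \<Prod>l\<in>UNIV. hh (y$l) (g l)) (PiE UNIV (\<lambda>_. UNIV)) = (\<Prod>l\<in>UNIV. infsum (hh (y$l)) UNIV)"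
    by (rule infsum_prod_PiE_abs) (use abs in auto)
  have pos: "(\<Prod>l\<in>UNIV. infsum (hh (y$l)) UNIV) > 0"
    by (rule prod_pos) (use hpos in auto)
  have sg: "(\<lambda>g. \<Prod>l\<in>UNIV. hh (y$l) (g l)) summable_on (UNIV :: ('d \<Rightarrow> int) set)"
  proof (rule ccontr)
    assume "\<not> ?thesis"
    then have "infsum (\<lambda>g. \<Prod>l\<in>UNIV. hh (y$l) (g l)) (UNIV :: ('d \<Rightarrow> int) set) = 0"
      by (rule infsum_not_exists)
    with eq pos show False by (simp del: prod_zero_iff)
  qed
  have bij: "bij_betw vec_nth (UNIV :: (int^'d) set) (UNIV :: ('d \<Rightarrow> int) set)"
    by (intro bij_betwI[of _ _ _ vec_lambda]) (auto simp: vec_eq_iff)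
  have s: "(\<lambda>k::int^'d. \<Prod>l\<in>UNIV. hh (y$l) (k$l)) summable_on UNIV"
    using summable_on_reindex_bij_betw[OF bij, of "\<lambda>g. \<Prod>l\<in>UNIV. hh (y$l) (g l)"] sg by simp
  have "infsum (\<lambda>k::int^'d. \<Prod>l\<in>UNIV. hh (y$l) (k$l)) UNIV = (\<Prod>l\<in>UNIV. infsum (hh (y$l)) UNIV)"
    using infsum_reindex_bij_betw[OF bij, of "\<lambda>g. \<Prod>l\<in>UNIV. hh (y$l) (g l)"] eq by simp
  also have "\<dots> \<le> (\<Prod>l\<in>(UNIV::'d set). 4 * S0)"
    by (rule prod_mono) (use hs hpos in \<open>auto intro: less_imp_le\<close>)
  finally show ?thesis using s by simp
qed

lemma norm_prod_bound:
  fixes z :: "real^'d"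
  shows "(1 + norm z) powr (- (2 * real CARD('d))) \<le> (\<Prod>l\<in>UNIV. 1 / (1 + \<bar>z$l\<bar>)^2)"
proof -
  have p: "1 + norm z > 0" using norm_ge_zero[of z] by linarith
  have "(1 + norm z) powr (- (2 * real CARD('d))) = inverse ((1 + norm z) powr (real (2 * CARD('d))))"
    by (simp add: powr_minus)
  also have "\<dots> = inverse ((1 + norm z) ^ (2 * CARD('d)))"
    using p powr_realpow[of "1 + norm z" "2 * CARD('d)"] by simp
  also have "\<dots> = (\<Prod>l\<in>(UNIV::'d set). 1 / (1 + norm z)^2)"
    by (simp add: power_mult power_one_over inverse_eq_divide)
  also have "\<dots> \<le> (\<Prod>l\<in>UNIV. 1 / (1 + \<bar>z$l\<bar>)^2)"
  proof (rule prod_mono, safe)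
    fix l
    show "0 \<le> 1 / (1 + norm z)^2" by simp
    have "\<bar>z$l\<bar> \<le> norm z" by (rule component_le_norm_cart)
    hence "(1 + \<bar>z$l\<bar>)^2 \<le> (1 + norm z)^2" by (intro power_mono) auto
    thus "1 / (1 + norm z)^2 \<le> 1 / (1 + \<bar>z$l\<bar>)^2"
      by (intro divide_left_mono) (auto intro!: mult_pos_pos)
  qed
  finally show ?thesis .
qed

lemma interp_bound:
  fixes u A B Q th :: real
  assumes "0 < th" "th < 1" "0 \<le> u" "u \<le> B" "u \<le> A * Q" "0 \<le> A" "0 \<le> Q"
  shows "u \<le> B powr th * A powr (1 - th) * Q powr (1 - th)"
proof (cases "u = 0")
  case True thus ?thesis by simp
next
  case False
  hence u: "u > 0" using assms by simp
  have "u = u powr th * u powr (1 - th)"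
    using u by (simp add: powr_add[symmetric])
  also have "\<dots> \<le> B powr th * (A * Q) powr (1 - th)"
    by (intro mult_mono powr_mono2) (use assms in auto)
  also have "\<dots> = B powr th * A powr (1 - th) * Q powr (1 - th)"
    using assms by (simp add: powr_mult)
  finally show ?thesis .
qed

lemma key_bound:
  fixes F :: "int^'d \<Rightarrow> complex" and y :: "real^'d"
  assumes th: "0 < th" "th < 1" and AB: "0 \<le> A" "0 \<le> B"
    and FB: "\<And>k. norm (F k) \<le> B"
    and FA: "\<And>k. norm (F k) \<le> A * (1 + norm (y - (\<chi> l. real_of_int (k$l)))) powr (- (2 * real CARD('d) / (1 - th)))"
  shows "F summable_on UNIV \<and> norm (infsum F UNIV) \<le> (4 * S0) ^ CARD('d) * (B powr th * A powr (1 - th))"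
proof -
  define M where "M = B powr th * A powr (1 - th)"
  define P where "P k = (\<Prod>l\<in>UNIV. hh (y$l) (k$l))" for k :: "int^'d"
  have M0: "M \<ge> 0" by (simp add: M_def)
  have P0: "P k \<ge> 0" for k by (simp add: P_def hh_def prod_nonneg)
  have pt: "norm (F k) \<le> M * P k" for k
  proof -
    define r where "r = norm (y - (\<chi> l. real_of_int (k$l)))"
    have r: "1 + r > 0" unfolding r_def using norm_ge_zero[of "y - (\<chi> l. real_of_int (k$l))"] by linarith
    have "norm (F k) \<le> M * ((1 + r) powr (- (2 * real CARD('d) / (1 - th)))) powr (1 - th)"
      unfolding M_def
      by (rule interp_bound) (use th AB FB[of k] FA[of k] in \<open>auto simp: r_def\<close>)
    also have "((1 + r) powr (- (2 * real CARD('d) / (1 - th)))) powr (1 - th) = (1 + r) powr (- (2 * real CARD('d)))"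
      using th by (simp add: powr_powr)
    also have "(1 + r) powr (- (2 * real CARD('d))) \<le> P k"
      using norm_prod_bound[of "y - (\<chi> l. real_of_int (k$l))"] unfolding r_def P_def hh_def
      by simp
    finally show ?thesis using M0 by (simp add: mult_left_mono)
  qed
  have Ps: "P summable_on UNIV" "infsum P UNIV \<le> (4 * S0) ^ CARD('d)"
    using lattice_sum[of y] unfolding P_def by auto
  have MPs: "(\<lambda>k. M * P k) summable_on UNIV" using Ps(1) by (rule summable_on_cmult_right)
  have ns: "(\<lambda>k. norm (F k)) summable_on UNIV"
    by (rule summable_on_comparison_test[OF MPs]) (use pt in auto)
  have Fs: "F summable_on UNIV" using ns by (rule abs_summable_summable)
  have "norm (infsum F UNIV) \<le> infsum (\<lambda>k. norm (F k)) UNIV"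
    using ns by (rule norm_infsum_bound)
  also have "\<dots> \<le> infsum (\<lambda>k. M * P k) UNIV"
    by (rule infsum_mono[OF ns MPs]) (use pt in auto)
  also have "\<dots> = M * infsum P UNIV" using Ps(1) by (simp add: infsum_cmult_right)
  also have "\<dots> \<le> M * (4 * S0) ^ CARD('d)" using Ps(2) M0 by (rule mult_left_mono)
  finally show ?thesis using Fs by (simp add: M_def mult.commute)
qed

definition Tj :: "(nat \<Rightarrow> real^'d \<Rightarrow> complex) \<Rightarrow> (nat \<Rightarrow> nat \<Rightarrow> int^'d \<Rightarrow> complex) \<Rightarrow> nat \<Rightarrow> nat \<Rightarrow> real^'d \<Rightarrow> complex" where
  "Tj \<psi> c N j x = (\<Sum>i=1..N. infsum (\<lambda>k. c i j k * wav \<psi> i j k x) UNIV)"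

lemma Psum_Tj: "Psum \<psi> c N J x = (\<Sum>j\<le>J. Tj \<psi> c N j x)"
  by (simp add: Psum_def Tj_def)

lemma level_bound:
  fixes \<psi> :: "nat \<Rightarrow> real^'d \<Rightarrow> complex" and c :: "nat \<Rightarrow> nat \<Rightarrow> int^'d \<Rightarrow> complex"
  assumes decay: "\<forall>i\<in>{1..N}. \<forall>n::real. n > 0 \<longrightarrow> (\<exists>Cn. \<forall>y. norm (\<psi> i y) \<le> Cn * (1 + norm y) powr (- n))"
    and C0: "C0 > 0" and coef: "\<forall>i\<in>{1..N}. \<forall>j k. norm (c i j k) \<le> C0 * 2 powr (a * real j)"
    and B0: "B0 \<ge> 0" and gb: "\<gamma> < \<beta>"
  shows "\<exists>K. \<forall>j x. (\<forall>i\<in>{1..N}. \<forall>k. norm (c i j k * wav \<psi> i j k x) \<le> B0 * 2 powr (\<gamma> * real j))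
            \<longrightarrow> norm (Tj \<psi> c N j x) \<le> K * 2 powr (\<beta> * real j)"
proof -
  define e where "e = min (1/2) ((\<beta> - \<gamma>) / (\<bar>a - \<gamma>\<bar> + 1))"
  have e0: "0 < e" "e \<le> 1/2" using gb by (auto simp: e_def min_def add_pos_nonneg)
  have e1: "e * \<bar>a - \<gamma>\<bar> \<le> \<beta> - \<gamma>"
  proof -
    have "e \<le> (\<beta> - \<gamma>) / (\<bar>a - \<gamma>\<bar> + 1)" by (simp add: e_def)
    hence "e * (\<bar>a - \<gamma>\<bar> + 1) \<le> \<beta> - \<gamma>" by (simp add: pos_le_divide_eq add_pos_nonneg)
    hence "e * \<bar>a - \<gamma>\<bar> + e \<le> \<beta> - \<gamma>" by (simp add: distrib_left)
    thus ?thesis using e0 by linarith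
  qed
  define th where "th = 1 - e"
  have th: "0 < th" "th < 1" using e0 by (auto simp: th_def)
  define n where "n = 2 * real CARD('d) / (1 - th)"
  have n0: "n > 0" using th by (simp add: n_def)
  have "\<forall>i\<in>{1..N}. \<exists>Cn. \<forall>y. norm (\<psi> i y) \<le> Cn * (1 + norm y) powr (- n)"
    using decay n0 by blast
  then obtain Cn where Cn: "\<And>i y. i \<in> {1..N} \<Longrightarrow> norm (\<psi> i y) \<le> Cn i * (1 + norm y) powr (- n)"
    by metis
  have Cn0: "Cn i \<ge> 0" if "i \<in> {1..N}" for i
  proof -
    have "0 \<le> Cn i * (1 + norm (0::real^'d)) powr (- n)" using Cn[OF that, of 0] norm_ge_zero order_trans by blast
    thus ?thesis by simp
  qed
  define S' where "S' = (4 * S0) ^ CARD('d)"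
  define K where "K = (\<Sum>i=1..N. S' * (B0 powr th * (C0 * Cn i) powr (1 - th)))"
  have expo: "th * \<gamma> + (1 - th) * a \<le> \<beta>"
  proof -
    have "th * \<gamma> + (1 - th) * a = \<gamma> + e * (a - \<gamma>)" by (simp add: th_def algebra_simps)
    also have "e * (a - \<gamma>) \<le> e * \<bar>a - \<gamma>\<bar>" using e0 by (intro mult_left_mono) auto
    finally show ?thesis using e1 by linarith
  qed
  show ?thesis
  proof (intro exI allI impI)
    fix j x
    assume hyp: "\<forall>i\<in>{1..N}. \<forall>k. norm (c i j k * wav \<psi> i j k x) \<le> B0 * 2 powr (\<gamma> * real j)"
    have each: "norm (infsum (\<lambda>k. c i j k * wav \<psi> i j k x) UNIV) \<le> S' * (B0 powr th * (C0 * Cn i) powr (1 - th)) * 2 powr (\<beta> * real j)"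
      if i: "i \<in> {1..N}" for i
    proof -
      define B where "B = B0 * 2 powr (\<gamma> * real j)"
      define A where "A = (C0 * Cn i) * 2 powr (a * real j)"
      define y where "y = (2::real) ^ j *\<^sub>R x"
      have FA: "norm (c i j k * wav \<psi> i j k x) \<le> A * (1 + norm (y - (\<chi> l. real_of_int (k$l)))) powr (- (2 * real CARD('d) / (1 - th)))" for k
      proof -
        have "norm (c i j k * wav \<psi> i j k x) = norm (c i j k) * norm (\<psi> i (y - (\<chi> l. real_of_int (k$l))))"
          by (simp add: wav_def y_def norm_mult)
        also have "\<dots> \<le> (C0 * 2 powr (a * real j)) * (Cn i * (1 + norm (y - (\<chi> l. real_of_int (k$l)))) powr (- n))"
          using coef i Cn[OF i] less_imp_le[OF C0] by (intro mult_mono) (auto intro: order_trans[OF norm_ge_zero])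
        also have "\<dots> = A * (1 + norm (y - (\<chi> l. real_of_int (k$l)))) powr (- (2 * real CARD('d) / (1 - th)))"
          by (simp add: A_def n_def algebra_simps)
        finally show ?thesis .
      qed
      have kb: "norm (infsum (\<lambda>k. c i j k * wav \<psi> i j k x) UNIV) \<le> S' * (B powr th * A powr (1 - th))"
        using key_bound[OF th, of A B "\<lambda>k. c i j k * wav \<psi> i j k x" y] FA hyp i C0 Cn0[OF i] B0
        unfolding S'_def A_def B_def by auto
      have "B powr th * A powr (1 - th) = (B0 powr th * (C0 * Cn i) powr (1 - th)) * 2 powr ((th * \<gamma> + (1 - th) * a) * real j)"
        using B0 C0 Cn0[OF i]
        by (simp add: A_def B_def powr_mult powr_powr powr_add[symmetric] algebra_simps)
      also have "\<dots> \<le> (B0 powr th * (C0 * Cn i) powr (1 - th)) * 2 powr (\<beta> * real j)"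
        using expo by (intro mult_left_mono powr_mono mult_right_mono) auto
      finally have "B powr th * A powr (1 - th) \<le> (B0 powr th * (C0 * Cn i) powr (1 - th)) * 2 powr (\<beta> * real j)" .
      moreover have "S' \<ge> 0" using S0_pos by (simp add: S'_def)
      ultimately have "S' * (B powr th * A powr (1 - th)) \<le> S' * ((B0 powr th * (C0 * Cn i) powr (1 - th)) * 2 powr (\<beta> * real j))"
        by (intro mult_left_mono)
      thus ?thesis using kb by (simp add: mult.assoc)
    qed
    have "norm (Tj \<psi> c N j x) \<le> (\<Sum>i=1..N. norm (infsum (\<lambda>k. c i j k * wav \<psi> i j k x) UNIV))"
      unfolding Tj_def by (rule norm_sum)
    also have "\<dots> \<le> (\<Sum>i=1..N. S' * (B0 powr th * (C0 * Cn i) powr (1 - th)) * 2 powr (\<beta> * real j))"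
      by (rule sum_mono) (rule each)
    also have "\<dots> = K * 2 powr (\<beta> * real j)"
      by (simp add: K_def sum_distrib_right)
    finally show "norm (Tj \<psi> c N j x) \<le> K * 2 powr (\<beta> * real j)" .
  qed
qed

lemma pow2_eq: "(2::real) powr (\<beta> * real j) = (2 powr \<beta>) ^ j"
proof -
  have "(2::real) powr (\<beta> * real j) = (2 powr \<beta>) powr (real j)" by (simp add: powr_powr)
  also have "\<dots> = (2 powr \<beta>) ^ j" by (rule powr_realpow) simp
  finally show ?thesis .
qed

lemma geom_tail:
  fixes T :: "nat \<Rightarrow> complex"
  assumes b: "\<beta> < 0" and TK: "\<And>j. norm (T j) \<le> K * 2 powr (\<beta> * real j)"
  shows "summable T \<and> (\<forall>J. norm (suminf T - (\<Sum>j\<le>J. T j)) \<le> (K / (1 - 2 powr \<beta>)) * 2 powr (\<beta> * real J))"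
proof -
  define r where "r = (2::real) powr \<beta>"
  have r: "0 < r" "r < 1" using b by (auto simp: r_def powr_less_one)
  have TK': "norm (T j) \<le> K * r ^ j" for j using TK[of j] by (simp add: pow2_eq r_def)
  have K0: "K \<ge> 0" by (metis TK' mult_1_right norm_ge_zero order_trans power_0)
  have gs: "summable (\<lambda>j. K * r ^ j)" using r by (intro summable_mult summable_geometric) auto
  have Ts: "summable T"
    by (rule summable_comparison_test[OF _ gs]) (use TK' in auto)
  have tail: "norm (suminf T - (\<Sum>j\<le>J. T j)) \<le> (K / (1 - r)) * r ^ J" for J
  proof -
    have "(\<lambda>i. T (i + Suc J)) sums (suminf T - (\<Sum>i<Suc J. T i))"
      using sums_split_initial_segment[OF summable_sums[OF Ts]] .
    hence eq: "suminf T - (\<Sum>j\<le>J. T j) = suminf (\<lambda>i. T (i + Suc J))"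
      by (simp add: lessThan_Suc_atMost sums_iff)
    have g2: "(\<lambda>i. (K * r ^ Suc J) * r ^ i) sums ((K * r ^ Suc J) * (1 / (1 - r)))"
      using r by (intro sums_mult geometric_sums) auto
    have "norm (suminf (\<lambda>i. T (i + Suc J))) \<le> suminf (\<lambda>i. (K * r ^ Suc J) * r ^ i)"
    proof (rule norm_suminf_le)
      show "norm (T (i + Suc J)) \<le> K * r ^ Suc J * r ^ i" for i
        using TK'[of "i + Suc J"] by (simp add: power_add mult_ac)
      show "summable (\<lambda>i. K * r ^ Suc J * r ^ i)" using g2 by (rule sums_summable)
    qed
    also have "\<dots> = (K * r ^ Suc J) * (1 / (1 - r))" using g2 by (rule sums_unique[symmetric])
    also have "\<dots> \<le> (K / (1 - r)) * r ^ J"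
    proof -
      have "K * r ^ Suc J \<le> K * r ^ J" using r K0 by (intro mult_left_mono) (auto simp: power_Suc2 mult_left_le)
      thus ?thesis using r by (simp add: divide_simps)
    qed
    finally show ?thesis using eq by simp
  qed
  show ?thesis using Ts tail by (simp add: pow2_eq r_def)
qed

lemma geom_sum_le:
  assumes r: "r > (1::real)"
  shows "(\<Sum>j\<le>J. r ^ j) \<le> (r / (r - 1)) * r ^ J"
proof -
  have "(\<Sum>j\<le>J. r ^ j) = (\<Sum>j<Suc J. r ^ j)" by (simp only: lessThan_Suc_atMost)
  also have "\<dots> = (r ^ Suc J - 1) / (r - 1)" using r by (intro geometric_sum) simp
  also have "\<dots> \<le> r ^ Suc J / (r - 1)" using r by (simp add: divide_right_mono)
  also have "\<dots> = (r / (r - 1)) * r ^ J" by simp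
  finally show ?thesis .
qed

theorem mainTheorem1:
  fixes \<psi> :: "nat \<Rightarrow> real^'d \<Rightarrow> complex"
    and c :: "nat \<Rightarrow> nat \<Rightarrow> int^'d \<Rightarrow> complex"
    and N :: nat
  assumes N: "N \<ge> 1"
    and bdd: "\<forall>i\<in>{1..N}. bounded (range (\<psi> i))"
    and decay: "\<forall>i\<in>{1..N}. \<forall>n::real. n > 0 \<longrightarrow> (\<exists>Cn. \<forall>y. norm (\<psi> i y) \<le> Cn * (1 + norm y) powr (- n))"
    and coef: "\<exists>a C0. C0 > 0 \<and> (\<forall>i\<in>{1..N}. \<forall>j k. norm (c i j k) \<le> C0 * 2 powr (a * real j))"
  shows
    "(\<forall>\<gamma> x. \<gamma> < 0 \<longrightarrow>
        (\<exists>C1>0. \<forall>i\<in>{1..N}. \<forall>j k. norm (c i j k * wav \<psi> i j k x) \<le> C1 * 2 powr (\<gamma> * real j)) \<longrightarrow>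
        (\<exists>f. (\<lambda>J. Psum \<psi> c N J x) \<longlonglongrightarrow> f \<and>
             (\<forall>\<gamma>'>\<gamma>. \<exists>C2>0. \<forall>J. norm (f - Psum \<psi> c N J x) \<le> C2 * 2 powr (\<gamma>' * real J))))
     \<and>
     (\<forall>\<gamma> x. \<gamma> > 0 \<longrightarrow>
        (\<exists>C>0. \<exists>js::nat \<Rightarrow> nat. filterlim js at_top sequentially \<and>
             (\<forall>n. norm (Psum \<psi> c N (js n) x) \<ge> C * 2 powr (\<gamma> * real (js n)))) \<longrightarrow>
        (\<forall>\<delta><\<gamma>. Drate \<psi> c N \<delta> x))"
proof -
  obtain a C0 where C0: "C0 > 0" and coef': "\<forall>i\<in>{1..N}. \<forall>j k. norm (c i j k) \<le> C0 * 2 powr (a * real j)"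
    using coef by blast
  have P1: "\<exists>f. (\<lambda>J. Psum \<psi> c N J x) \<longlonglongrightarrow> f \<and>
             (\<forall>\<gamma>'>\<gamma>. \<exists>C2>0. \<forall>J. norm (f - Psum \<psi> c N J x) \<le> C2 * 2 powr (\<gamma>' * real J))"
    if g: "\<gamma> < 0" and h1: "\<exists>C1>0. \<forall>i\<in>{1..N}. \<forall>j k. norm (c i j k * wav \<psi> i j k x) \<le> C1 * 2 powr (\<gamma> * real j)"
    for \<gamma> and x :: "real^'d"
  proof -
    obtain C1 where C1: "C1 > 0" and hyp: "\<forall>i\<in>{1..N}. \<forall>j k. norm (c i j k * wav \<psi> i j k x) \<le> C1 * 2 powr (\<gamma> * real j)"
      using h1 by blast
    have rate: "\<exists>K. \<forall>j. norm (Tj \<psi> c N j x) \<le> K * 2 powr (\<beta> * real j)" if gb: "\<gamma> < \<beta>" for \<beta>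
    proof -
      obtain K where K: "\<forall>j x. (\<forall>i\<in>{1..N}. \<forall>k. norm (c i j k * wav \<psi> i j k x) \<le> C1 * 2 powr (\<gamma> * real j))
            \<longrightarrow> norm (Tj \<psi> c N j x) \<le> K * 2 powr (\<beta> * real j)"
        using level_bound[OF decay C0 coef' less_imp_le[OF C1] gb] by blast
      show ?thesis
      proof (intro exI allI)
        fix j
        have "\<forall>i\<in>{1..N}. \<forall>k. norm (c i j k * wav \<psi> i j k x) \<le> C1 * 2 powr (\<gamma> * real j)"
          using hyp by blast
        thus "norm (Tj \<psi> c N j x) \<le> K * 2 powr (\<beta> * real j)" using K by blast
      qed
    qed
    define T where "T j = Tj \<psi> c N j x" for j
    obtain K1 where K1: "\<And>j. norm (T j) \<le> K1 * 2 powr ((\<gamma>/2) * real j)"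
      using rate[of "\<gamma>/2"] g unfolding T_def by auto
    have "summable T \<and> (\<forall>J. norm (suminf T - (\<Sum>j\<le>J. T j)) \<le> (K1 / (1 - 2 powr (\<gamma>/2))) * 2 powr ((\<gamma>/2) * real J))"
      by (rule geom_tail) (use g K1 in auto)
    hence Ts: "summable T" by blast
    define f where "f = suminf T"
    have lim: "(\<lambda>J. Psum \<psi> c N J x) \<longlonglongrightarrow> f"
    proof -
      have "(\<lambda>n. \<Sum>i<n. T i) \<longlonglongrightarrow> f" unfolding f_def using Ts by (rule summable_LIMSEQ)
      hence "(\<lambda>n. \<Sum>i<Suc n. T i) \<longlonglongrightarrow> f" by (rule LIMSEQ_Suc)
      thus ?thesis by (simp add: Psum_Tj T_def lessThan_Suc_atMost)
    qed
    have rt: "\<exists>C2>0. \<forall>J. norm (f - Psum \<psi> c N J x) \<le> C2 * 2 powr (\<gamma>' * real J)" if gg: "\<gamma>' > \<gamma>" for \<gamma>'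
    proof -
      define \<beta> where "\<beta> = min \<gamma>' (\<gamma>/2)"
      have b: "\<gamma> < \<beta>" "\<beta> < 0" "\<beta> \<le> \<gamma>'" using g gg by (auto simp: \<beta>_def)
      obtain K where K: "\<And>j. norm (T j) \<le> K * 2 powr (\<beta> * real j)"
        using rate[OF b(1)] unfolding T_def by auto
      have "norm (T 0) \<le> K" using K[of 0] by simp
      hence K0: "K \<ge> 0" by (rule order_trans[OF norm_ge_zero])
      have tl: "\<forall>J. norm (suminf T - (\<Sum>j\<le>J. T j)) \<le> (K / (1 - 2 powr \<beta>)) * 2 powr (\<beta> * real J)"
        using geom_tail[of \<beta> T K] b K by blast
      have q: "0 < 1 - 2 powr \<beta>" using b by (simp add: powr_less_one)
      define C2 where "C2 = K / (1 - 2 powr \<beta>) + 1"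
      have "K / (1 - 2 powr \<beta>) \<ge> 0" using K0 q by simp
      hence C2: "C2 > 0" by (simp add: C2_def)
      show ?thesis
      proof (intro exI[of _ C2] conjI allI C2)
        fix J
        have "norm (f - Psum \<psi> c N J x) \<le> (K / (1 - 2 powr \<beta>)) * 2 powr (\<beta> * real J)"
          using tl unfolding f_def Psum_Tj T_def by blast
        also have "\<dots> \<le> C2 * 2 powr (\<gamma>' * real J)"
        proof (rule mult_mono)
          show "K / (1 - 2 powr \<beta>) \<le> C2" by (simp add: C2_def)
          have "\<beta> * real J \<le> \<gamma>' * real J" using b(3) by (rule mult_right_mono) simp
          thus "2 powr (\<beta> * real J) \<le> 2 powr (\<gamma>' * real J)" by (rule powr_mono) simp
          show "0 \<le> C2" using C2 by simp
          show "0 \<le> 2 powr (\<beta> * real J)" by simp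
        qed
        finally show "norm (f - Psum \<psi> c N J x) \<le> C2 * 2 powr (\<gamma>' * real J)" .
      qed
    qed
    show ?thesis using lim rt by blast
  qed
  have P2: "Drate \<psi> c N \<delta> x"
    if g: "\<gamma> > 0" and h2: "\<exists>C>0. \<exists>js::nat \<Rightarrow> nat. filterlim js at_top sequentially \<and>
             (\<forall>n. norm (Psum \<psi> c N (js n) x) \<ge> C * 2 powr (\<gamma> * real (js n)))"
      and d: "\<delta> < \<gamma>"
    for \<gamma> \<delta> and x :: "real^'d"
  proof (rule ccontr)
    assume nD: "\<not> Drate \<psi> c N \<delta> x"
    obtain C js where C: "C > 0" and js: "filterlim js at_top sequentially"
      and big: "\<And>n. norm (Psum \<psi> c N (js n) x) \<ge> C * 2 powr (\<gamma> * real (js n))"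
      using h2 by blast
    have "\<exists>j0. \<forall>j\<ge>j0. \<forall>i\<in>{1..N}. \<forall>k. norm (c i j k * wav \<psi> i j k x) \<le> 1 * 2 powr (\<delta> * real j)"
    proof (rule ccontr)
      assume A: "\<not> ?thesis"
      have "\<forall>n. \<exists>j i k. j \<ge> n \<and> i \<in> {1..N} \<and> norm (c i j k * wav \<psi> i j k x) > 2 powr (\<delta> * real j)"
      proof
        fix n
        from A obtain j where jn: "j \<ge> n" and "\<not> (\<forall>i\<in>{1..N}. \<forall>k. norm (c i j k * wav \<psi> i j k x) \<le> 1 * 2 powr (\<delta> * real j))"
          by blast
        then obtain i k where "i \<in> {1..N}" "\<not> norm (c i j k * wav \<psi> i j k x) \<le> 1 * 2 powr (\<delta> * real j)"
          by blast
        thus "\<exists>j i k. j \<ge> n \<and> i \<in> {1..N} \<and> norm (c i j k * wav \<psi> i j k x) > 2 powr (\<delta> * real j)"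
          using jn by (intro exI[of _ j] exI[of _ i] exI[of _ k]) auto
      qed
      then obtain J I Kk where JIK: "\<And>n. J n \<ge> n \<and> I n \<in> {1..N} \<and> norm (c (I n) (J n) (Kk n) * wav \<psi> (I n) (J n) (Kk n) x) > 2 powr (\<delta> * real (J n))"
        by metis
      have FL: "filterlim J at_top sequentially"
        unfolding filterlim_at_top
      proof
        fix Z
        show "eventually (\<lambda>n. Z \<le> J n) sequentially"
          using eventually_ge_at_top[of Z] by eventually_elim (use JIK in \<open>blast intro: order_trans\<close>)
      qed
      have "\<exists>is js ks. filterlim (js :: nat \<Rightarrow> nat) at_top sequentially \<and>
         (\<forall>n. is n \<in> {1..N} \<and> norm (c (is n) (js n) (ks n) * wav \<psi> (is n) (js n) (ks n) x) \<ge> 1 * 2 powr (\<delta> * real (js n)))"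
        using JIK FL by (intro exI[of _ I] exI[of _ J] exI[of _ Kk]) (auto intro: less_imp_le)
      hence "Drate \<psi> c N \<delta> x" unfolding Drate_def by (intro exI[of _ "1::real"]) simp
      with nD show False by blast
    qed
    then obtain j0 where j0: "\<And>j. j \<ge> j0 \<Longrightarrow> \<forall>i\<in>{1..N}. \<forall>k. norm (c i j k * wav \<psi> i j k x) \<le> 1 * 2 powr (\<delta> * real j)"
      by blast
    define \<beta> where "\<beta> = (max \<delta> 0 + \<gamma>) / 2"
    have b: "\<delta> < \<beta>" "0 < \<beta>" "\<beta> < \<gamma>" using g d by (auto simp: \<beta>_def)
    obtain K where K: "\<forall>j x. (\<forall>i\<in>{1..N}. \<forall>k. norm (c i j k * wav \<psi> i j k x) \<le> 1 * 2 powr (\<delta> * real j))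
            \<longrightarrow> norm (Tj \<psi> c N j x) \<le> K * 2 powr (\<beta> * real j)"
      using level_bound[OF decay C0 coef' _ b(1), of 1] by auto
    define T where "T j = Tj \<psi> c N j x" for j
    define M where "M = (\<Sum>j<j0. norm (T j))"
    have Kj: "norm (T j) \<le> K * 2 powr (\<beta> * real j)" if "j \<ge> j0" for j
      using K j0[OF that] unfolding T_def by blast
    have "0 \<le> K * 2 powr (\<beta> * real j0)" by (rule order_trans[OF norm_ge_zero Kj[of j0]]) simp
    hence K0: "K \<ge> 0" by (simp add: zero_le_mult_iff)
    have M0: "M \<ge> 0" by (simp add: M_def sum_nonneg)
    define r where "r = (2::real) powr \<beta>"
    have r: "r > 1" using b by (simp add: r_def)
    have pw: "2 powr (\<beta> * real j) = r ^ j" for j by (simp add: pow2_eq r_def)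
    have allj: "norm (T j) \<le> (K + M) * r ^ j" for j
    proof (cases "j \<ge> j0")
      case True
      have "K * r ^ j \<le> (K + M) * r ^ j" by (rule mult_right_mono) (use M0 r in auto)
      thus ?thesis using Kj[OF True] by (simp add: pw)
    next
      case False
      hence "norm (T j) \<le> M" unfolding M_def
        by (intro member_le_sum) auto
      also have "M \<le> (K + M) * r ^ j"
      proof -
        have "1 \<le> r ^ j" by (rule one_le_power) (use r in simp)
        hence "(K + M) * 1 \<le> (K + M) * r ^ j" by (rule mult_left_mono) (use K0 M0 in simp)
        thus ?thesis using K0 by simp
      qed
      finally show ?thesis .
    qed
    define L where "L = (K + M) * (r / (r - 1))"
    have PL: "norm (Psum \<psi> c N J x) \<le> L * 2 powr (\<beta> * real J)" for J
    proof -
      have "norm (Psum \<psi> c N J x) \<le> (\<Sum>j\<le>J. norm (T j))"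
        unfolding Psum_Tj T_def by (rule norm_sum)
      also have "\<dots> \<le> (\<Sum>j\<le>J. (K + M) * r ^ j)" by (rule sum_mono) (rule allj)
      also have "\<dots> = (K + M) * (\<Sum>j\<le>J. r ^ j)" by (simp add: sum_distrib_left)
      also have "\<dots> \<le> (K + M) * ((r / (r - 1)) * r ^ J)"
        using K0 M0 geom_sum_le[OF r, of J] by (intro mult_left_mono) auto
      finally show ?thesis by (simp add: L_def pw mult.assoc)
    qed
    define e where "e = \<gamma> - \<beta>"
    have e: "e > 0" using b by (simp add: e_def)
    have l2: "ln (2::real) > 0" by simp
    obtain Z :: nat where Z: "real Z > L / (C * e * ln 2)"
      using reals_Archimedean2 by blast
    have "eventually (\<lambda>n. Z \<le> js n) sequentially"
      using js unfolding filterlim_at_top by blast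
    then obtain n where nZ: "Z \<le> js n"
      by (meson eventually_sequentially order_refl)
    have "L / C < e * real Z * ln 2"
      using Z C e l2 by (simp add: pos_divide_less_eq mult_ac)
    also have "\<dots> \<le> e * real (js n) * ln 2"
      using nZ e l2 by (intro mult_right_mono mult_left_mono) auto
    also have "\<dots> < 1 + e * real (js n) * ln 2" by simp
    also have "\<dots> \<le> exp (e * real (js n) * ln 2)" by (rule exp_ge_add_one_self)
    also have "\<dots> = 2 powr ((\<gamma> - \<beta>) * real (js n))" by (simp add: powr_def e_def)
    finally have n: "2 powr ((\<gamma> - \<beta>) * real (js n)) > L / C" .
    define J where "J = js n"
    have "C * 2 powr (\<gamma> * real J) \<le> L * 2 powr (\<beta> * real J)"
      using big[of n] PL[of J] unfolding J_def by linarith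
    moreover have "2 powr (\<gamma> * real J) = 2 powr ((\<gamma> - \<beta>) * real J) * 2 powr (\<beta> * real J)"
      by (simp add: powr_add[symmetric] algebra_simps)
    ultimately have "C * 2 powr ((\<gamma> - \<beta>) * real J) \<le> L"
      by (simp add: mult.assoc[symmetric])
    moreover have "C * 2 powr ((\<gamma> - \<beta>) * real J) > L"
      using n C unfolding J_def by (simp add: pos_divide_less_eq mult.commute)
    ultimately show False by linarith
  qed
  show ?thesis using P1 P2 by blast
qed

end
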